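(* If for some $t'>0$ the set $I(t')$ is a single point, i.e. $l(t')=r(t')$, then for all $t>t'$ the set $I(t)$ has empty interior, i.e. $l(t)=r(t)$ whenever $I(t)\ne\emptyset$.
   Context: Standing assumptions: $u_0,u_b:[0,\infty)\to\mathbb{R}$ bounded measurable with $u_b>0$; $\rho_0,\rho_b:[0,\infty)\to(0,\infty)$ positive locally bounded measurable. For $x,t,y,\tau\ge0$: $F(y,x,t)=\int_0^y[tu_0(\eta)+\eta-x]\rho_0(\eta)\,d\eta$, $G(\tau,x,t)=\int_0^\tau[x-u_b(\eta)(t-\eta)]\rho_b(\eta)u_b(\eta)\,d\eta$, $F(x,t)=\min_{y\ge0}F(y,x,t)$, $G(x,t)=\min_{\tau\ge0}G(\tau,x,t)$. For fixed $t$, $F(\cdot,t)$ is decreasing and $G(\cdot,t)$ increasing in $x$, so $I(t)=\{x\ge0:F(x,t)=G(x,t)\}$ is a closed (possibly empty) interval, written $[l(t),r(t)]$ when nonempty. *)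

theory Defs
  imports "HOL-Analysis.Analysis"
begin

definition Fyxt :: "(real \<Rightarrow> real) \<Rightarrow> (real \<Rightarrow> real) \<Rightarrow> real \<Rightarrow> real \<Rightarrow> real \<Rightarrow> real" where
  "Fyxt u0 rho0 y x t = (LINT \<eta>:{0..y}|lborel. (t * u0 \<eta> + \<eta> - x) * rho0 \<eta>)"

definition Gtxt :: "(real \<Rightarrow> real) \<Rightarrow> (real \<Rightarrow> real) \<Rightarrow> real \<Rightarrow> real \<Rightarrow> real \<Rightarrow> real" where
  "Gtxt ub rhob \<tau> x t = (LINT \<eta>:{0..\<tau>}|lborel. (x - ub \<eta> * (t - \<eta>)) * rhob \<eta> * ub \<eta>)"

text \<open>F(x,t) = min over y >= 0 (the minimum is attained; written as an infimum)\<close>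
definition Fmin :: "(real \<Rightarrow> real) \<Rightarrow> (real \<Rightarrow> real) \<Rightarrow> real \<Rightarrow> real \<Rightarrow> real" where
  "Fmin u0 rho0 x t = (INF y\<in>{0..}. Fyxt u0 rho0 y x t)"

definition Gmin :: "(real \<Rightarrow> real) \<Rightarrow> (real \<Rightarrow> real) \<Rightarrow> real \<Rightarrow> real \<Rightarrow> real" where
  "Gmin ub rhob x t = (INF \<tau>\<in>{0..}. Gtxt ub rhob \<tau> x t)"

definition Iset :: "(real \<Rightarrow> real) \<Rightarrow> (real \<Rightarrow> real) \<Rightarrow> (real \<Rightarrow> real) \<Rightarrow> (real \<Rightarrow> real) \<Rightarrow> real \<Rightarrow> real set" where
  "Iset u0 rho0 ub rhob t = {x. 0 \<le> x \<and> Fmin u0 rho0 x t = Gmin ub rhob x t}"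

end

theory Submission imports Defs begin

definition M0 :: "(real \<Rightarrow> real) \<Rightarrow> bool" where
  "M0 f \<longleftrightarrow> (\<lambda>\<eta>. indicator {0..} \<eta> * f \<eta>) \<in> borel_measurable lborel"
definition LB :: "(real \<Rightarrow> real) \<Rightarrow> bool" where
  "LB f \<longleftrightarrow> (\<forall>T. \<exists>B. \<forall>\<eta>\<in>{0..T}. \<bar>f \<eta>\<bar> \<le> B)"

lemma M0_set: "set_borel_measurable lborel {0..} f \<Longrightarrow> M0 f"
  by (simp add: M0_def set_borel_measurable_def)
lemma M0_const: "M0 (\<lambda>_. c)"
  unfolding M0_def by measurable
lemma M0_id: "M0 (\<lambda>\<eta>. \<eta>)"
  unfolding M0_def by measurable
lemma M0_add: "M0 f \<Longrightarrow> M0 g \<Longrightarrow> M0 (\<lambda>\<eta>. f \<eta> + g \<eta>)"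
proof -
  assume a: "M0 f" "M0 g"
  have "(\<lambda>\<eta>. indicator {0..} \<eta> * (f \<eta> + g \<eta>)) = (\<lambda>\<eta>. indicator {0..} \<eta> * f \<eta> + indicator {0..} \<eta> * g \<eta>)"
    by (auto simp: fun_eq_iff algebra_simps)
  then show ?thesis using a unfolding M0_def by simp
qed
lemma M0_diff: "M0 f \<Longrightarrow> M0 g \<Longrightarrow> M0 (\<lambda>\<eta>. f \<eta> - g \<eta>)"
proof -
  assume a: "M0 f" "M0 g"
  have "(\<lambda>\<eta>. indicator {0..} \<eta> * (f \<eta> - g \<eta>)) = (\<lambda>\<eta>. indicator {0..} \<eta> * f \<eta> - indicator {0..} \<eta> * g \<eta>)"
    by (auto simp: fun_eq_iff algebra_simps)
  then show ?thesis using a unfolding M0_def by simp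
qed
lemma M0_mult: "M0 f \<Longrightarrow> M0 g \<Longrightarrow> M0 (\<lambda>\<eta>. f \<eta> * g \<eta>)"
proof -
  assume a: "M0 f" "M0 g"
  have "(\<lambda>\<eta>. indicator {0..} \<eta> * (f \<eta> * g \<eta>)) = (\<lambda>\<eta>. (indicator {0..} \<eta> * f \<eta>) * (indicator {0..} \<eta> * g \<eta>))"
    by (auto simp: fun_eq_iff algebra_simps indicator_def)
  then show ?thesis using a unfolding M0_def by simp
qed
lemma M0_min0: "M0 f \<Longrightarrow> M0 (\<lambda>\<eta>. min 0 (f \<eta>))"
proof -
  assume a: "M0 f"
  have "(\<lambda>\<eta>. indicator {0..} \<eta> * min 0 (f \<eta>)) = (\<lambda>\<eta>. min 0 (indicator {0..} \<eta> * f \<eta>))"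
    by (auto simp: fun_eq_iff indicator_def)
  then show ?thesis using a unfolding M0_def by simp
qed

lemma LB_const: "LB (\<lambda>_. c)"
  unfolding LB_def by blast
lemma LB_id: "LB (\<lambda>\<eta>. \<eta>)"
  unfolding LB_def by (metis abs_of_nonneg atLeastAtMost_iff order_trans)
lemma LB_add: "LB f \<Longrightarrow> LB g \<Longrightarrow> LB (\<lambda>\<eta>. f \<eta> + g \<eta>)"
  unfolding LB_def by (meson abs_triangle_ineq add_mono order_trans)
lemma LB_diff: "LB f \<Longrightarrow> LB g \<Longrightarrow> LB (\<lambda>\<eta>. f \<eta> - g \<eta>)"
  unfolding LB_def by (meson abs_triangle_ineq4 add_mono order_trans)
lemma LB_mult: "LB f \<Longrightarrow> LB g \<Longrightarrow> LB (\<lambda>\<eta>. f \<eta> * g \<eta>)"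
  unfolding LB_def
proof (intro allI)
  fix T assume "\<forall>T. \<exists>B. \<forall>\<eta>\<in>{0..T}. \<bar>f \<eta>\<bar> \<le> B" "\<forall>T. \<exists>B. \<forall>\<eta>\<in>{0..T}. \<bar>g \<eta>\<bar> \<le> B"
  then obtain B1 B2 where b: "\<forall>\<eta>\<in>{0..T}. \<bar>f \<eta>\<bar> \<le> B1" "\<forall>\<eta>\<in>{0..T}. \<bar>g \<eta>\<bar> \<le> B2" by blast
  have "\<forall>\<eta>\<in>{0..T}. \<bar>f \<eta> * g \<eta>\<bar> \<le> B1 * B2"
    using b by (simp add: abs_mult mult_mono')
  then show "\<exists>B. \<forall>\<eta>\<in>{0..T}. \<bar>f \<eta> * g \<eta>\<bar> \<le> B" by blast
qed
lemma LB_min0: "LB f \<Longrightarrow> LB (\<lambda>\<eta>. min 0 (f \<eta>))"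
  unfolding LB_def by (metis (no_types, opaque_lifting) abs_if min_def neg_0_le_iff_le order_trans abs_ge_zero linorder_not_le less_imp_le)

lemma M0_LB_int: assumes "M0 f" "LB f" shows "set_integrable lborel {0..T} f"
proof -
  obtain B where B: "\<forall>\<eta>\<in>{0..T}. \<bar>f \<eta>\<bar> \<le> B" using assms(2) unfolding LB_def by blast
  have e: "(\<lambda>x. indicator {0..T} x *\<^sub>R f x) = (\<lambda>x. indicator {0..T} x * (indicator {0..} x * f x))"
    by (auto simp: fun_eq_iff indicator_def)
  have m: "(\<lambda>x. indicator {0..T} x *\<^sub>R f x) \<in> borel_measurable lborel"
    unfolding e using assms(1) unfolding M0_def by simp
  show ?thesis unfolding set_integrable_def
    apply (rule integrableI_bounded_set[where A="{0..T}" and B=B])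
    using m B by (auto simp: indicator_def emeasure_lborel_Icc_eq)
qed

lemma LINT_00: "(LINT \<eta>:{0..0::real}|lborel. f \<eta>) = (0::real)"
proof -
  have "AE x in lborel. indicator {0..0::real} x *\<^sub>R f x = 0"
    using AE_lborel_singleton[of 0] by eventually_elim auto
  then show ?thesis unfolding set_lebesgue_integral_def by (simp add: integral_eq_zero_AE)
qed

lemma bdd_LINT:
  assumes "M0 f" "LB f" "\<forall>\<eta>\<ge>a. f \<eta> \<ge> 0"
  shows "bdd_below ((\<lambda>y. LINT \<eta>:{0..y}|lborel. f \<eta>) ` {0..})"
proof -
  define g where "g = (\<lambda>\<eta>. min 0 (f \<eta>))"
  have ig: "set_integrable lborel {0..T} g" for T
    unfolding g_def by (intro M0_LB_int M0_min0 LB_min0 assms)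
  have if_: "set_integrable lborel {0..T} f" for T
    by (intro M0_LB_int assms)
  have "(LINT \<eta>:{0..a}|lborel. g \<eta>) \<le> (LINT \<eta>:{0..y}|lborel. f \<eta>)" for y
  proof -
    have "(LINT \<eta>:{0..y}|lborel. g \<eta>) \<le> (LINT \<eta>:{0..y}|lborel. f \<eta>)"
      by (rule set_integral_mono[OF ig if_]) (simp add: g_def)
    moreover have "(LINT \<eta>:{0..a}|lborel. g \<eta>) \<le> (LINT \<eta>:{0..y}|lborel. g \<eta>)"
      unfolding set_lebesgue_integral_def
    proof (rule integral_mono)
      show "integrable lborel (\<lambda>x. indicator {0..a} x *\<^sub>R g x)" using ig[of a] by (simp add: set_integrable_def)
      show "integrable lborel (\<lambda>x. indicator {0..y} x *\<^sub>R g x)" using ig[of y] by (simp add: set_integrable_def)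
      fix x show "indicator {0..a} x *\<^sub>R g x \<le> indicator {0..y} x *\<^sub>R g x"
        using assms(3) by (auto simp: indicator_def g_def)
    qed
    ultimately show ?thesis by linarith
  qed
  then show ?thesis by (intro bdd_belowI2) blast
qed

lemma inf_nonneg:
  fixes H P m :: "real \<Rightarrow> real"
  assumes "\<forall>y\<ge>0. H y = P y + d * m y" "\<forall>y\<ge>0. -K * m y \<le> H y" "d>0" "K\<ge>0"
    "(INF y\<in>{0..}. H y) = c" "(INF y\<in>{0..}. P y) = c" "bdd_below (P ` {0..})"
  shows "0 \<le> c"
proof (rule ccontr)
  assume "\<not> 0 \<le> c" hence c: "c < 0" by simp
  define e where "e = - c * d / (2 * (d + K))"
  have e0: "e > 0" unfolding e_def using c assms(3,4) by (intro divide_pos_pos mult_pos_pos) auto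
  have "Inf (H ` {0..}) < c + e" using assms(5) e0 by simp
  then obtain y where y: "y \<ge> 0" "H y < c + e"
    using cInf_lessD[of "H ` {0..}" "c+e"] by auto
  have Py: "c \<le> P y" using cINF_lower[OF assms(7), of y] assms(6) y by simp
  have dm: "d * m y < e" using assms(1) y Py by force
  have Km: "K * m y \<le> K * e / d"
  proof -
    have "m y < e / d" using dm assms(3) by (simp add: field_simps)
    thus ?thesis using assms(4) by (metis less_imp_le mult_left_mono times_divide_eq_right)
  qed
  have "-K * m y < c + e" using assms(2) y by force
  hence "c > - e - K * e / d" using Km by linarith
  moreover have "- e - K * e / d = c / 2"
  proof -
    have dK: "d + K \<noteq> 0" using assms(3,4) by linarith
    have "- e - K * e / d = - e * (d + K) / d" using assms(3) by (simp add: field_simps)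
    also have "- e * (d + K) = c * d / 2"
    proof -
      have "2 * d + 2 * K \<noteq> 0" using dK by linarith
      then show ?thesis unfolding e_def by (simp add: field_simps)
    qed
    also have "c * d / 2 / d = c / 2" using assms(3) by simp
    finally show ?thesis .
  qed
  ultimately show False using c by linarith
qed

theorem corollary2p8:
  fixes u0 ub rho0 rhob :: "real \<Rightarrow> real" and t' :: real
  assumes u0_meas: "set_borel_measurable lborel {0..} u0"
      and u0_bdd: "\<exists>B. \<forall>\<eta>\<ge>0. \<bar>u0 \<eta>\<bar> \<le> B"
      and ub_meas: "set_borel_measurable lborel {0..} ub"
      and ub_bdd: "\<exists>B. \<forall>\<eta>\<ge>0. \<bar>ub \<eta>\<bar> \<le> B"
      and ub_pos: "\<forall>\<eta>\<ge>0. ub \<eta> > 0"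
      and rho0_meas: "set_borel_measurable lborel {0..} rho0"
      and rho0_pos: "\<forall>\<eta>\<ge>0. rho0 \<eta> > 0"
      and rho0_lbdd: "\<forall>T. \<exists>B. \<forall>\<eta>\<in>{0..T}. \<bar>rho0 \<eta>\<bar> \<le> B"
      and rhob_meas: "set_borel_measurable lborel {0..} rhob"
      and rhob_pos: "\<forall>\<eta>\<ge>0. rhob \<eta> > 0"
      and rhob_lbdd: "\<forall>T. \<exists>B. \<forall>\<eta>\<in>{0..T}. \<bar>rhob \<eta>\<bar> \<le> B"
      and t'_pos: "t' > 0"
      and single: "\<exists>p. Iset u0 rho0 ub rhob t' = {p}"
  shows "\<forall>t>t'. Iset u0 rho0 ub rhob t \<noteq> {} \<longrightarrow> (\<exists>p. Iset u0 rho0 ub rhob t = {p})"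
proof -
  obtain Bu where Bu: "\<forall>\<eta>\<ge>0. \<bar>u0 \<eta>\<bar> \<le> Bu" using u0_bdd by blast
  obtain Bb where Bb: "\<forall>\<eta>\<ge>0. \<bar>ub \<eta>\<bar> \<le> Bb" using ub_bdd by blast
  have Bu0: "Bu \<ge> 0" using Bu by (meson abs_ge_zero order_refl order_trans)
  have Bb0: "Bb \<ge> 0" using Bb by (meson abs_ge_zero order_refl order_trans)
  have M: "M0 u0" "M0 ub" "M0 rho0" "M0 rhob"
    using u0_meas ub_meas rho0_meas rhob_meas by (auto intro: M0_set)
  have L: "LB u0" "LB ub" "LB rho0" "LB rhob"
  proof -
    show "LB u0" unfolding LB_def using Bu by (intro allI exI[of _ Bu]) auto
    show "LB ub" unfolding LB_def using Bb by (intro allI exI[of _ Bb]) auto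
    show "LB rho0" "LB rhob" unfolding LB_def using rho0_lbdd rhob_lbdd by auto
  qed
  let ?fF = "\<lambda>x t \<eta>. (t * u0 \<eta> + \<eta> - x) * rho0 \<eta>"
  let ?fG = "\<lambda>x t \<eta>. (x - ub \<eta> * (t - \<eta>)) * rhob \<eta> * ub \<eta>"
  have MF: "M0 (?fF x t)" "LB (?fF x t)" for x t
    by (intro M0_mult M0_add M0_diff M0_const M0_id LB_mult LB_add LB_diff LB_const LB_id M L)+
  have MG: "M0 (?fG x t)" "LB (?fG x t)" for x t
    by (intro M0_mult M0_add M0_diff M0_const M0_id LB_mult LB_add LB_diff LB_const LB_id M L)+
  have MR: "M0 (\<lambda>\<eta>. rhob \<eta> * ub \<eta>)" "LB (\<lambda>\<eta>. rhob \<eta> * ub \<eta>)"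
    by (intro M0_mult LB_mult M L)+
  have iF: "set_integrable lborel {0..T} (?fF x t)" for x t T by (intro M0_LB_int MF)
  have iG: "set_integrable lborel {0..T} (?fG x t)" for x t T by (intro M0_LB_int MG)
  have iR0: "set_integrable lborel {0..T} rho0" for T by (intro M0_LB_int M L)
  have iRb: "set_integrable lborel {0..T} (\<lambda>\<eta>. rhob \<eta> * ub \<eta>)" for T by (intro M0_LB_int MR)
  have bF: "bdd_below ((\<lambda>y. Fyxt u0 rho0 y x t) ` {0..})" if "t \<ge> 0" for x t
    unfolding Fyxt_def
  proof (rule bdd_LINT[OF MF, where a="max 0 (x + t * Bu)"], intro allI impI)
    fix \<eta> :: real assume h: "max 0 (x + t * Bu) \<le> \<eta>"
    have e0: "\<eta> \<ge> 0" using h by simp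
    have "\<bar>u0 \<eta>\<bar> \<le> Bu" using Bu e0 by blast
    hence "- Bu \<le> u0 \<eta>" by linarith
    hence "t * (- Bu) \<le> t * u0 \<eta>" using that by (rule mult_left_mono)
    hence "- (t * Bu) \<le> t * u0 \<eta>" by simp
    moreover have "x + t * Bu \<le> \<eta>" using h by simp
    ultimately have "0 \<le> t * u0 \<eta> + \<eta> - x" by linarith
    moreover have "0 \<le> rho0 \<eta>" using rho0_pos e0 by (simp add: less_imp_le)
    ultimately show "0 \<le> ?fF x t \<eta>" by simp
  qed
  have bG: "bdd_below ((\<lambda>\<tau>. Gtxt ub rhob \<tau> x t) ` {0..})" if "x \<ge> 0" for x t
    unfolding Gtxt_def
  proof (rule bdd_LINT[OF MG, where a="max 0 t"], intro allI impI)
    fix \<eta> :: real assume h: "max 0 t \<le> \<eta>"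
    have e0: "\<eta> \<ge> 0" using h by simp
    have u: "ub \<eta> > 0" using ub_pos e0 by blast
    have r: "rhob \<eta> > 0" using rhob_pos e0 by blast
    have "ub \<eta> * (t - \<eta>) \<le> 0" using h u
      by (intro mult_nonneg_nonpos) auto
    hence "0 \<le> x - ub \<eta> * (t - \<eta>)" using that by linarith
    then show "0 \<le> ?fG x t \<eta>" using u r by simp
  qed
  have monoF: "Fyxt u0 rho0 y x' t \<le> Fyxt u0 rho0 y x t" if "x \<le> x'" for x x' t y
    unfolding Fyxt_def
    by (rule set_integral_mono[OF iF iF]) (use that rho0_pos in \<open>auto intro: mult_right_mono\<close>)
  have monoG: "Gtxt ub rhob \<tau> x t \<le> Gtxt ub rhob \<tau> x' t" if "x \<le> x'" for x x' t \<tau>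
    unfolding Gtxt_def
    by (rule set_integral_mono[OF iG iG]) (use that rhob_pos ub_pos in \<open>auto intro!: mult_right_mono\<close>)
  have FminMono: "Fmin u0 rho0 x' t \<le> Fmin u0 rho0 x t" if "x \<le> x'" "t \<ge> 0" for x x' t
    unfolding Fmin_def
    by (rule cINF_mono) (use bF[OF that(2)] monoF[OF that(1)] in auto)
  have GminMono: "Gmin ub rhob x t \<le> Gmin ub rhob x' t" if "x \<le> x'" "x \<ge> 0" for x x' t
    unfolding Gmin_def
    by (rule cINF_mono) (use bG[OF that(2)] monoG[OF that(1)] in auto)
  have Fmin0: "Fmin u0 rho0 x t = 0" if "\<forall>y\<ge>0. Fyxt u0 rho0 y x t \<ge> 0" for x t
    unfolding Fmin_def
  proof (rule cInf_eq_minimum)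
    have "Fyxt u0 rho0 0 x t = 0" unfolding Fyxt_def by (rule LINT_00)
    then show "0 \<in> (\<lambda>y. Fyxt u0 rho0 y x t) ` {0..}" by (metis atLeast_iff image_eqI order_refl)
  qed (use that in auto)
  have Gmin0: "Gmin ub rhob x t = 0" if "\<forall>y\<ge>0. Gtxt ub rhob y x t \<ge> 0" for x t
    unfolding Gmin_def
  proof (rule cInf_eq_minimum)
    have "Gtxt ub rhob 0 x t = 0" unfolding Gtxt_def by (rule LINT_00)
    then show "0 \<in> (\<lambda>y. Gtxt ub rhob y x t) ` {0..}" by (metis atLeast_iff image_eqI order_refl)
  qed (use that in auto)
  have iR0c: "set_integrable lborel {0..T} (\<lambda>\<eta>. a * rho0 \<eta>)" for a T
    by (intro M0_LB_int M0_mult LB_mult M0_const LB_const M L)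
  have iRbc: "set_integrable lborel {0..T} (\<lambda>\<eta>. a * (rhob \<eta> * ub \<eta>))" for a T
    by (intro M0_LB_int M0_mult LB_mult M0_const LB_const MR)
  have iFc: "set_integrable lborel {0..T} (\<lambda>\<eta>. a * ?fF x t \<eta>)" for a x t T
    by (intro M0_LB_int M0_mult LB_mult M0_const LB_const MF)
  have iGc: "set_integrable lborel {0..T} (\<lambda>\<eta>. a * ?fG x t \<eta>)" for a x t T
    by (intro M0_LB_int M0_mult LB_mult M0_const LB_const MG)
  have Fsplit: "Fyxt u0 rho0 y x1 t = Fyxt u0 rho0 y x2 t + (x2 - x1) * (LINT \<eta>:{0..y}|lborel. rho0 \<eta>)" for y x1 x2 t
  proof -
    have eq: "?fF x1 t = (\<lambda>\<eta>. ?fF x2 t \<eta> + (x2 - x1) * rho0 \<eta>)" by (auto simp: fun_eq_iff algebra_simps)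
    show ?thesis unfolding Fyxt_def
      by (subst eq, subst set_integral_add(2)[OF iF iR0c]) simp
  qed
  have Gsplit: "Gtxt ub rhob y x2 t = Gtxt ub rhob y x1 t + (x2 - x1) * (LINT \<eta>:{0..y}|lborel. rhob \<eta> * ub \<eta>)" for y x1 x2 t
  proof -
    have eq: "?fG x2 t = (\<lambda>\<eta>. ?fG x1 t \<eta> + (x2 - x1) * (rhob \<eta> * ub \<eta>))" by (auto simp: fun_eq_iff algebra_simps)
    show ?thesis unfolding Gtxt_def
      by (subst eq, subst set_integral_add(2)[OF iG iRbc]) simp
  qed
  have Flow: "- (t * Bu + x) * (LINT \<eta>:{0..y}|lborel. rho0 \<eta>) \<le> Fyxt u0 rho0 y x t" if "t \<ge> 0" for y x t
  proof -
    have "- (t * Bu + x) * (LINT \<eta>:{0..y}|lborel. rho0 \<eta>) = (LINT \<eta>:{0..y}|lborel. - (t * Bu + x) * rho0 \<eta>)"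
      by simp
    also have "\<dots> \<le> Fyxt u0 rho0 y x t" unfolding Fyxt_def
    proof (rule set_integral_mono[OF iR0c iF])
      fix \<eta> :: real assume "\<eta> \<in> {0..y}"
      hence e0: "\<eta> \<ge> 0" by simp
      have "\<bar>u0 \<eta>\<bar> \<le> Bu" using Bu e0 by blast
      hence "- Bu \<le> u0 \<eta>" by linarith
      hence "t * (- Bu) \<le> t * u0 \<eta>" using that by (rule mult_left_mono)
      hence "- (t * Bu + x) \<le> t * u0 \<eta> + \<eta> - x" using e0 by simp
      moreover have "0 \<le> rho0 \<eta>" using rho0_pos e0 by (simp add: less_imp_le)
      ultimately show "- (t * Bu + x) * rho0 \<eta> \<le> ?fF x t \<eta>" by (rule mult_right_mono)
    qed
    finally show ?thesis .
  qed
  have Glow: "- (t * Bb) * (LINT \<eta>:{0..y}|lborel. rhob \<eta> * ub \<eta>) \<le> Gtxt ub rhob y x t" if "t \<ge> 0" "x \<ge> 0" for y x t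
  proof -
    have "- (t * Bb) * (LINT \<eta>:{0..y}|lborel. rhob \<eta> * ub \<eta>) = (LINT \<eta>:{0..y}|lborel. - (t * Bb) * (rhob \<eta> * ub \<eta>))"
      by (rule set_integral_mult_right[symmetric])
    also have "\<dots> \<le> Gtxt ub rhob y x t" unfolding Gtxt_def
    proof (rule set_integral_mono[OF iRbc iG])
      fix \<eta> :: real assume "\<eta> \<in> {0..y}"
      hence e0: "\<eta> \<ge> 0" by simp
      have u: "ub \<eta> > 0" using ub_pos e0 by blast
      have r: "rhob \<eta> > 0" using rhob_pos e0 by blast
      have "\<bar>ub \<eta>\<bar> \<le> Bb" using Bb e0 by blast
      hence "ub \<eta> \<le> Bb" by linarith
      hence "t * ub \<eta> \<le> t * Bb" using that(1) by (rule mult_left_mono)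
      moreover have "0 \<le> ub \<eta> * \<eta>" using u e0 by simp
      ultimately have "- (t * Bb) \<le> x - ub \<eta> * (t - \<eta>)" using that(2) by (simp add: algebra_simps)
      moreover have "0 \<le> rhob \<eta> * ub \<eta>" using u r by simp
      ultimately have "- (t * Bb) * (rhob \<eta> * ub \<eta>) \<le> (x - ub \<eta> * (t - \<eta>)) * (rhob \<eta> * ub \<eta>)"
        by (rule mult_right_mono)
      then show "- (t * Bb) * (rhob \<eta> * ub \<eta>) \<le> ?fG x t \<eta>" by (simp add: mult.assoc)
    qed
    finally show ?thesis .
  qed
  have scaleF: "c * Fyxt u0 rho0 y x t \<le> Fyxt u0 rho0 y (c * x) (c * t)" if "0 < c" "c \<le> 1" for c y x t
  proof -
    have "c * Fyxt u0 rho0 y x t = (LINT \<eta>:{0..y}|lborel. c * ?fF x t \<eta>)" unfolding Fyxt_def by simp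
    also have "\<dots> \<le> Fyxt u0 rho0 y (c * x) (c * t)" unfolding Fyxt_def
    proof (rule set_integral_mono[OF iFc iF])
      fix \<eta> :: real assume "\<eta> \<in> {0..y}"
      hence e0: "\<eta> \<ge> 0" by simp
      have r: "rho0 \<eta> > 0" using rho0_pos e0 by blast
      have "0 \<le> (1 - c) * (\<eta> * rho0 \<eta>)" using that e0 r by simp
      moreover have "c * ?fF x t \<eta> + (1 - c) * (\<eta> * rho0 \<eta>) = ?fF (c * x) (c * t) \<eta>"
        by (simp add: algebra_simps)
      ultimately show "c * ?fF x t \<eta> \<le> ?fF (c * x) (c * t) \<eta>" by linarith
    qed
    finally show ?thesis .
  qed
  have scaleG: "c * Gtxt ub rhob y x t \<le> Gtxt ub rhob y (c * x) (c * t)" if "0 < c" "c \<le> 1" for c y x t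
  proof -
    have "c * Gtxt ub rhob y x t = (LINT \<eta>:{0..y}|lborel. c * ?fG x t \<eta>)" unfolding Gtxt_def by simp
    also have "\<dots> \<le> Gtxt ub rhob y (c * x) (c * t)" unfolding Gtxt_def
    proof (rule set_integral_mono[OF iGc iG])
      fix \<eta> :: real assume "\<eta> \<in> {0..y}"
      hence e0: "\<eta> \<ge> 0" by simp
      have u: "ub \<eta> > 0" using ub_pos e0 by blast
      have r: "rhob \<eta> > 0" using rhob_pos e0 by blast
      have "0 \<le> (1 - c) * (ub \<eta> * \<eta> * rhob \<eta> * ub \<eta>)" using that e0 r u by simp
      moreover have "c * ?fG x t \<eta> + (1 - c) * (ub \<eta> * \<eta> * rhob \<eta> * ub \<eta>) = ?fG (c * x) (c * t) \<eta>"
        by (simp add: algebra_simps)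
      ultimately show "c * ?fG x t \<eta> \<le> ?fG (c * x) (c * t) \<eta>" by linarith
    qed
    finally show ?thesis .
  qed
  have key: False if tt: "t > t'" "x1 < x2" "x1 \<in> Iset u0 rho0 ub rhob t" "x2 \<in> Iset u0 rho0 ub rhob t" for t x1 x2
  proof -
    have t0: "t \<ge> 0" using tt(1) t'_pos by linarith
    have x1: "0 \<le> x1" "Fmin u0 rho0 x1 t = Gmin ub rhob x1 t" using tt(3) by (auto simp: Iset_def)
    have x2: "0 \<le> x2" "Fmin u0 rho0 x2 t = Gmin ub rhob x2 t" using tt(4) by (auto simp: Iset_def)
    have a: "Fmin u0 rho0 x2 t \<le> Fmin u0 rho0 x1 t" using FminMono tt(2) t0 by simp
    have b: "Gmin ub rhob x1 t \<le> Gmin ub rhob x2 t" using GminMono tt(2) x1(1) by simp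
    define c where "c = Fmin u0 rho0 x2 t"
    have c1: "Fmin u0 rho0 x1 t = c" "Gmin ub rhob x1 t = c" "Gmin ub rhob x2 t = c"
      using a b x1 x2 unfolding c_def by linarith+
    have "0 \<le> c"
    proof (rule inf_nonneg[where H="\<lambda>y. Fyxt u0 rho0 y x1 t" and P="\<lambda>y. Fyxt u0 rho0 y x2 t"
          and m="\<lambda>y. LINT \<eta>:{0..y}|lborel. rho0 \<eta>" and d="x2 - x1" and K="t * Bu + x1"])
      show "\<forall>y\<ge>0. Fyxt u0 rho0 y x1 t = Fyxt u0 rho0 y x2 t + (x2 - x1) * (LINT \<eta>:{0..y}|lborel. rho0 \<eta>)"
        using Fsplit by blast
      show "\<forall>y\<ge>0. - (t * Bu + x1) * (LINT \<eta>:{0..y}|lborel. rho0 \<eta>) \<le> Fyxt u0 rho0 y x1 t"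
        using Flow t0 by blast
      show "0 < x2 - x1" using tt(2) by simp
      show "0 \<le> t * Bu + x1" using t0 Bu0 x1(1) by simp
      show "(INF y\<in>{0..}. Fyxt u0 rho0 y x1 t) = c" using c1(1) unfolding Fmin_def .
      show "(INF y\<in>{0..}. Fyxt u0 rho0 y x2 t) = c" unfolding c_def Fmin_def ..
      show "bdd_below ((\<lambda>y. Fyxt u0 rho0 y x2 t) ` {0..})" by (rule bF[OF t0])
    qed
    have Fpos: "0 \<le> Fyxt u0 rho0 y x2 t" if "y \<ge> 0" for y
      using cINF_lower[OF bF[OF t0], of y x2] that \<open>0 \<le> c\<close> unfolding c_def Fmin_def by simp
    have "0 \<le> c"
    proof (rule inf_nonneg[where H="\<lambda>y. Gtxt ub rhob y x2 t" and P="\<lambda>y. Gtxt ub rhob y x1 t"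
          and m="\<lambda>y. LINT \<eta>:{0..y}|lborel. rhob \<eta> * ub \<eta>" and d="x2 - x1" and K="t * Bb"])
      show "\<forall>y\<ge>0. Gtxt ub rhob y x2 t = Gtxt ub rhob y x1 t + (x2 - x1) * (LINT \<eta>:{0..y}|lborel. rhob \<eta> * ub \<eta>)"
        using Gsplit by blast
      show "\<forall>y\<ge>0. - (t * Bb) * (LINT \<eta>:{0..y}|lborel. rhob \<eta> * ub \<eta>) \<le> Gtxt ub rhob y x2 t"
        using Glow t0 x2(1) by blast
      show "0 < x2 - x1" using tt(2) by simp
      show "0 \<le> t * Bb" using t0 Bb0 by simp
      show "(INF y\<in>{0..}. Gtxt ub rhob y x2 t) = c" using c1(3) unfolding Gmin_def .
      show "(INF y\<in>{0..}. Gtxt ub rhob y x1 t) = c" using c1(2) unfolding Gmin_def .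
      show "bdd_below ((\<lambda>y. Gtxt ub rhob y x1 t) ` {0..})" by (rule bG[OF x1(1)])
    qed
    have Gpos: "0 \<le> Gtxt ub rhob y x1 t" if "y \<ge> 0" for y
      using cINF_lower[OF bG[OF x1(1)], of y t] that \<open>0 \<le> c\<close> c1(2) unfolding Gmin_def by simp
    define s where "s = t' / t"
    have s0: "0 < s" "s \<le> 1" using tt(1) t'_pos unfolding s_def by auto
    have ts: "t' = s * t" using tt(1) t'_pos unfolding s_def by simp
    have inI: "z \<in> Iset u0 rho0 ub rhob t'" if z: "s * x1 \<le> z" "z \<le> s * x2" for z
    proof -
      have z0: "0 \<le> z" using z(1) s0 x1(1) by (meson mult_nonneg_nonneg less_imp_le order_trans)
      have "Fmin u0 rho0 z t' = 0"
      proof (rule Fmin0, intro allI impI)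
        fix y :: real assume y: "y \<ge> 0"
        have "0 \<le> s * Fyxt u0 rho0 y x2 t" using Fpos[OF y] s0 by simp
        also have "\<dots> \<le> Fyxt u0 rho0 y (s * x2) t'" unfolding ts using scaleF s0 by blast
        also have "\<dots> \<le> Fyxt u0 rho0 y z t'" using monoF z(2) by blast
        finally show "0 \<le> Fyxt u0 rho0 y z t'" .
      qed
      moreover have "Gmin ub rhob z t' = 0"
      proof (rule Gmin0, intro allI impI)
        fix y :: real assume y: "y \<ge> 0"
        have "0 \<le> s * Gtxt ub rhob y x1 t" using Gpos[OF y] s0 by simp
        also have "\<dots> \<le> Gtxt ub rhob y (s * x1) t'" unfolding ts using scaleG s0 by blast
        also have "\<dots> \<le> Gtxt ub rhob y z t'" using monoG z(1) by blast
        finally show "0 \<le> Gtxt ub rhob y z t'" .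
      qed
      ultimately show ?thesis using z0 unfolding Iset_def by simp
    qed
    have l: "s * x1 \<in> Iset u0 rho0 ub rhob t'" using inI tt(2) s0 by (simp add: less_imp_le)
    have r: "s * x2 \<in> Iset u0 rho0 ub rhob t'" using inI tt(2) s0 by (simp add: less_imp_le)
    have "s * x1 < s * x2" using tt(2) s0 by simp
    then show False using l r single by auto
  qed
  show ?thesis
  proof (intro allI impI)
    fix t assume t: "t > t'" "Iset u0 rho0 ub rhob t \<noteq> {}"
    then obtain p where p: "p \<in> Iset u0 rho0 ub rhob t" by blast
    have "Iset u0 rho0 ub rhob t = {p}"
    proof
      show "{p} \<subseteq> Iset u0 rho0 ub rhob t" using p by simp
      show "Iset u0 rho0 ub rhob t \<subseteq> {p}"
      proof
        fix q assume q: "q \<in> Iset u0 rho0 ub rhob t"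
        show "q \<in> {p}"
        proof (cases q p rule: linorder_cases)
          case less then show ?thesis using key[OF t(1) less q p] by simp
        next
          case greater then show ?thesis using key[OF t(1) greater p q] by simp
        qed simp
      qed
    qed
    then show "\<exists>p. Iset u0 rho0 ub rhob t = {p}" by blast
  qed
qed

end
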